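(* Let $p$ and $q$ be probability distributions on a countable set $\mathcal{A}$ with $\mathrm{dist}(p,q)\le\epsilon$. Let $N\ge1$ be an integer and let $p^N,q^N$ be the product distributions on $\mathcal{A}^N$ (i.i.d. sampling from $p$, resp. $q$). For any $R_N\subset\mathcal{A}^N$ and $\alpha>0$, if $p^N(R_N)\ge1-\alpha$, then \[q^N(R_N)\ge 1-\alpha-2N^3\sqrt{4\epsilon\ln 2}-\frac1N.\]
   Context: $D(p\|q)=\sum_y p(y)\log_2\frac{p(y)}{q(y)}$ and $\mathrm{dist}(p,q):=D(p\|\frac{p+q}{2})+D(q\|\frac{p+q}{2})$. *)

theory Defs
  imports "HOL-Probability.Probability"
begin

definition KL_div :: "'a pmf \<Rightarrow> 'a pmf \<Rightarrow> real" where
  "KL_div p q = (\<Sum>\<^sub>\<infinity>y\<in>UNIV. (if pmf p y = 0 then 0 else pmf p y * log 2 (pmf p y / pmf q y)))"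

definition mid_pmf :: "'a pmf \<Rightarrow> 'a pmf \<Rightarrow> 'a pmf" where
  "mid_pmf p q = bind_pmf (bernoulli_pmf (1/2)) (\<lambda>b. if b then p else q)"

definition JS_dist :: "'a pmf \<Rightarrow> 'a pmf \<Rightarrow> real" where
  "JS_dist p q = KL_div p (mid_pmf p q) + KL_div q (mid_pmf p q)"

end

theory Submission
  imports Defs
begin


lemma pmf_mid: "pmf (mid_pmf p q) y = (pmf p y + pmf q y) / 2"
  by (simp add: mid_pmf_def pmf_bind)


lemma ln2_half: "ln (2::real) \<ge> 1/2"
proof -
  have "ln (1/2::real) \<le> 1/2 - 1" by (rule ln_le_minus_one) simp
  then show ?thesis by (simp add: ln_div)
qed

definition Tf :: "real \<Rightarrow> real \<Rightarrow> real" where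
  "Tf a m = (if a = 0 then 0 else a * log 2 (a / m))"

lemma Tf_lower:
  assumes "a \<ge> 0" "m > 0"
  shows "ln 2 * Tf a m \<ge> 2 * a - 2 * sqrt a * sqrt m"
proof (cases "a = 0")
  case True then show ?thesis by (simp add: Tf_def)
next
  case False
  then have a: "a > 0" using assms by simp
  have "ln (sqrt (m/a)) \<le> sqrt (m/a) - 1" using a assms by (intro ln_le_minus_one) simp
  then have "ln (m/a) \<le> 2 * sqrt (m/a) - 2" using a assms by (simp add: ln_sqrt)
  then have "ln (a/m) \<ge> 2 - 2 * sqrt (m/a)" using a assms by (simp add: ln_div)
  then have "a * ln (a/m) \<ge> a * (2 - 2 * sqrt (m/a))" using a by (simp add: mult_left_mono)
  moreover have "a * sqrt (m/a) = sqrt a * sqrt m"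
  proof -
    have "a * sqrt (m/a) = (sqrt a * sqrt a) * (sqrt m / sqrt a)" using a by (simp add: real_sqrt_divide)
    also have "\<dots> = sqrt a * sqrt m"
    proof -
      have gen: "\<And>u v::real. u > 0 \<Longrightarrow> (u * u) * (v / u) = u * v" by (simp add: field_simps)
      show ?thesis using a by (intro gen) simp
    qed
    finally show ?thesis .
  qed
  moreover have "ln 2 * Tf a m = a * ln (a/m)" using False by (simp add: Tf_def log_def)
  ultimately show ?thesis by (simp add: algebra_simps)
qed

lemma Tf_upper:
  assumes "a \<ge> 0" "a \<le> 2 * m"
  shows "Tf a m \<le> a"
proof (cases "a = 0")
  case True then show ?thesis by (simp add: Tf_def)
next
  case False
  then have a: "a > 0" "m > 0" using assms by auto
  have "log 2 (a/m) \<le> log 2 2" using a assms by (subst log_le_cancel_iff) (auto simp: field_simps)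
  then have "a * log 2 (a/m) \<le> a * 1" using a by (intro mult_left_mono) auto
  then show ?thesis using False by (simp add: Tf_def)
qed

lemma Tf_bound:
  assumes "a \<ge> 0" "a \<le> 2 * m" "m > 0"
  shows "\<bar>Tf a m\<bar> \<le> a + 2 * m"
proof -
  have l: "ln 2 * Tf a m \<ge> 2 * a - 2 * sqrt a * sqrt m" using Tf_lower assms by auto
  have "2 * sqrt a * sqrt m \<le> a + m"
  proof -
    have "0 \<le> (sqrt a - sqrt m)^2" by simp
    also have "\<dots> = a - 2 * sqrt a * sqrt m + m" using assms by (simp add: power2_diff)
    finally show ?thesis by linarith
  qed
  then have l2: "ln 2 * Tf a m \<ge> - m" using l assms by linarith
  have lh: "ln (2::real) \<ge> 1/2" by (rule ln2_half)
  have "Tf a m \<ge> - 2 * m"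
  proof (cases "Tf a m \<ge> 0")
    case True then show ?thesis using assms(3) by linarith
  next
    case False
    then have "Tf a m \<le> 0" by linarith
    then have "ln 2 * Tf a m \<le> (1/2) * Tf a m" by (rule mult_right_mono_neg[OF lh])
    then show ?thesis using l2 by linarith
  qed
  then show ?thesis using Tf_upper[OF assms(1,2)] assms by linarith
qed

lemma pointwise:
  assumes a: "a \<ge> 0" and b: "b \<ge> 0" and l: "c > 0"
  shows "\<bar>a - b\<bar> \<le> ln 2 * (Tf a ((a+b)/2) + Tf b ((a+b)/2)) / c + c * (a + b)"
proof (cases "a + b = 0")
  case True
  then have "a = 0" "b = 0" using a b by auto
  then show ?thesis by (simp add: Tf_def)
next
  case False
  define m where "m = (a+b)/2"
  have m: "m > 0" using False a b by (simp add: m_def)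
  define x where "x = sqrt a"
  define y where "y = sqrt b"
  define z where "z = sqrt m"
  have xa: "x^2 = a" "x \<ge> 0" using a by (auto simp: x_def)
  have yb: "y^2 = b" "y \<ge> 0" using b by (auto simp: y_def)
  have zm: "z^2 = m" "z \<ge> 0" using m by (auto simp: z_def)
  define T where "T = ln 2 * (Tf a m + Tf b m)"
  have T1: "T \<ge> 2*a + 2*b - 2*(x*z) - 2*(y*z)"
    using Tf_lower[OF a m] Tf_lower[OF b m] unfolding T_def x_def y_def z_def
    by (simp add: algebra_simps)
  have h2: "(x-z)^2+(y-z)^2 = 2*a+2*b-2*(x*z)-2*(y*z)"
    using xa yb zm m_def by (simp add: power2_diff algebra_simps)
  have h1: "(x-y)^2 \<le> 2*((x-z)^2 + (y-z)^2)"
  proof -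
    have "0 \<le> (x+y-2*z)^2" by simp
    then show ?thesis by (simp add: power2_eq_square algebra_simps)
  qed
  have "(x-y)^2 \<le> 2*(2*a+2*b-2*(x*z)-2*(y*z))" using h1 h2 by simp
  moreover have "2*(2*a+2*b-2*(x*z)-2*(y*z)) \<le> 2*T" using T1 by simp
  ultimately have hT: "(x-y)^2 \<le> 2*T" by (rule order_trans)
  have h3: "2*c*(\<bar>x-y\<bar>*(x+y)) \<le> (x-y)^2 + c^2*(x+y)^2"
  proof -
    have "0 \<le> (\<bar>x-y\<bar> - c*(x+y))^2" by simp
    also have "\<dots> = \<bar>x-y\<bar>^2 - 2*c*(\<bar>x-y\<bar>*(x+y)) + c^2*(x+y)^2"
      by (simp add: power2_diff power_mult_distrib)
    also have "\<bar>x-y\<bar>^2 = (x-y)^2" by simp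
    finally show ?thesis by linarith
  qed
  have h4: "(x+y)^2 \<le> 2*(a+b)"
  proof -
    have "0 \<le> (x-y)^2" by simp
    then show ?thesis using xa yb by (simp add: power2_eq_square algebra_simps)
  qed
  have "a - b = (x-y)*(x+y)" using xa yb by (simp add: power2_eq_square algebra_simps)
  then have e: "\<bar>a-b\<bar> = \<bar>x-y\<bar>*(x+y)" using xa yb by (simp add: abs_mult)
  have h5: "c^2*(x+y)^2 \<le> c^2*(2*(a+b))" using h4 by (intro mult_left_mono) auto
  have "2*c*\<bar>a-b\<bar> = 2*c*(\<bar>x-y\<bar>*(x+y))" using e by simp
  also have "\<dots> \<le> (x-y)^2 + c^2*(x+y)^2" by (rule h3)
  also have "\<dots> \<le> 2*T + c^2*(2*(a+b))" using hT h5 by (rule add_mono)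
  finally have "2*c*\<bar>a-b\<bar> \<le> 2*T + c^2*(2*(a+b))" .
  then have "\<bar>a-b\<bar> \<le> T/c + c*(a+b)" using l
    by (simp add: field_simps power2_eq_square)
  then show ?thesis by (simp add: T_def m_def)
qed



lemma prob_bind: "measure_pmf.prob (bind_pmf M N) X = measure_pmf.expectation M (\<lambda>x. measure_pmf.prob (N x) X)"
proof -
  have i: "integrable (measure_pmf M) (\<lambda>x. measure_pmf.prob (N x) X)"
    by (rule measure_pmf.integrable_const_bound[where B=1]) auto
  have "emeasure (bind_pmf M N) X = (\<integral>\<^sup>+x. ennreal (measure_pmf.prob (N x) X) \<partial>M)"
    by (subst emeasure_bind_pmf) (simp add: measure_pmf.emeasure_eq_measure)
  also have "\<dots> = ennreal (measure_pmf.expectation M (\<lambda>x. measure_pmf.prob (N x) X))"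
    by (rule nn_integral_eq_integral[OF i]) auto
  finally show ?thesis by (simp add: measure_pmf.emeasure_eq_measure)
qed
lemma rep_Suc: "replicate_pmf (Suc n) p = bind_pmf p (\<lambda>x. map_pmf ((#) x) (replicate_pmf n p))"
  by (simp add: map_pmf_def)

lemma pmf_summable: "pmf p summable_on A"
  using pmf_abs_summable[of p A] abs_summable_equivalent abs_summable_summable by blast

lemma expect_infsum:
  assumes "\<And>x. \<bar>f x\<bar> \<le> 1"
  shows "measure_pmf.expectation p f = (\<Sum>\<^sub>\<infinity>x. pmf p x * f x)"
      "(\<lambda>x. pmf p x * f x) summable_on UNIV"
proof -
  have n: "norm (pmf p x * f x) \<le> norm (pmf p x)" for x
    using assms[of x] by (simp add: abs_mult mult_left_le)
  have *: "Infinite_Set_Sum.abs_summable_on (\<lambda>x. pmf p x * f x) UNIV"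
    by (rule Infinite_Set_Sum.abs_summable_on_comparison_test[OF pmf_abs_summable[of p UNIV] n])
  then show "measure_pmf.expectation p f = (\<Sum>\<^sub>\<infinity>x. pmf p x * f x)"
    by (simp add: pmf_expectation_eq_infsetsum infsetsum_infsum)
  show "(\<lambda>x. pmf p x * f x) summable_on UNIV"
    using * abs_summable_equivalent abs_summable_summable by blast
qed

lemma pmf_infsum1: "(\<Sum>\<^sub>\<infinity>x. pmf p x) = 1"
  using infsetsum_pmf_eq_1[of p UNIV] infsetsum_infsum[OF pmf_abs_summable[of p UNIV]] by simp

lemma absdiff_summable: "(\<lambda>x. \<bar>pmf p x - pmf q x\<bar>) summable_on UNIV"
proof (rule summable_on_comparison_test)
  show "(\<lambda>x. pmf p x + pmf q x) summable_on UNIV"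
    by (intro summable_on_add pmf_summable)
  fix x show "\<bar>pmf p x - pmf q x\<bar> \<le> pmf p x + pmf q x" "0 \<le> \<bar>pmf p x - pmf q x\<bar>"
    using pmf_nonneg[of p x] pmf_nonneg[of q x] by linarith+
qed

lemma infsum_le_add:
  fixes f g h :: "'b \<Rightarrow> real"
  assumes "f summable_on UNIV" "g summable_on UNIV" "h summable_on UNIV" "\<And>x. f x \<le> g x + h x"
  shows "infsum f UNIV \<le> infsum g UNIV + infsum h UNIV"
proof -
  have "infsum f UNIV \<le> infsum (\<lambda>x. g x + h x) UNIV"
    by (rule infsum_mono[OF assms(1) summable_on_add[OF assms(2,3)] assms(4)])
  also have "\<dots> = infsum g UNIV + infsum h UNIV" by (rule infsum_add[OF assms(2,3)])
  finally show ?thesis .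
qed

lemma gdiff:
  assumes "0 \<le> (g::real)" "g \<le> 1"
  shows "a * g \<le> b * g + \<bar>a - b\<bar>"
proof -
  have "(a - b) * g \<le> \<bar>a - b\<bar> * g" using assms by (intro mult_right_mono) auto
  also have "\<dots> \<le> \<bar>a - b\<bar> * 1" using assms by (intro mult_left_mono) auto
  finally show ?thesis by (simp add: algebra_simps)
qed

lemma hybrid:
  "\<bar>measure_pmf.prob (replicate_pmf n p) R - measure_pmf.prob (replicate_pmf n q) R\<bar>
     \<le> real n * (\<Sum>\<^sub>\<infinity>x. \<bar>pmf p x - pmf q x\<bar>)"
proof (induction n arbitrary: R)
  case 0
  then show ?case by simp
next
  case (Suc n)
  define D where "D = (\<Sum>\<^sub>\<infinity>x. \<bar>pmf p x - pmf q x\<bar>)"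
  define f where "f x = measure_pmf.prob (replicate_pmf n p) ((#) x -` R)" for x
  define g where "g x = measure_pmf.prob (replicate_pmf n q) ((#) x -` R)" for x
  have fb: "\<bar>f x\<bar> \<le> 1" for x by (simp add: f_def)
  have gb: "\<bar>g x\<bar> \<le> 1" for x by (simp add: g_def)
  have fg: "\<bar>f x - g x\<bar> \<le> real n * D" for x
    using Suc.IH[of "(#) x -` R"] by (simp add: f_def g_def D_def)
  have P: "measure_pmf.prob (replicate_pmf (Suc n) p) R = (\<Sum>\<^sub>\<infinity>x. pmf p x * f x)"
    unfolding rep_Suc prob_bind by (simp add: f_def[symmetric] expect_infsum(1)[OF fb])
  have Q: "measure_pmf.prob (replicate_pmf (Suc n) q) R = (\<Sum>\<^sub>\<infinity>x. pmf q x * g x)"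
    unfolding rep_Suc prob_bind by (simp add: g_def[symmetric] expect_infsum(1)[OF gb])
  have sf: "(\<lambda>x. pmf p x * f x) summable_on UNIV" by (rule expect_infsum(2)[OF fb])
  have sgp: "(\<lambda>x. pmf p x * g x) summable_on UNIV" by (rule expect_infsum(2)[OF gb])
  have sgq: "(\<lambda>x. pmf q x * g x) summable_on UNIV" by (rule expect_infsum(2)[OF gb])
  have sK: "(\<lambda>x. pmf p x * (real n * D)) summable_on UNIV"
    by (intro summable_on_cmult_left pmf_summable)
  have sA: "(\<lambda>x. \<bar>pmf p x - pmf q x\<bar>) summable_on UNIV" by (rule absdiff_summable)
  have sA': "(\<lambda>x. \<bar>pmf q x - pmf p x\<bar>) summable_on UNIV" by (rule absdiff_summable)
  have D': "(\<Sum>\<^sub>\<infinity>x. \<bar>pmf q x - pmf p x\<bar>) = D" unfolding D_def by (simp add: abs_minus_commute)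
  have K: "(\<Sum>\<^sub>\<infinity>x. pmf p x * (real n * D)) = real n * D"
    by (subst infsum_cmult_left) (auto simp: pmf_summable pmf_infsum1)
  have u1: "(\<Sum>\<^sub>\<infinity>x. pmf p x * f x) \<le> (\<Sum>\<^sub>\<infinity>x. pmf p x * g x) + real n * D"
  proof -
    have "(\<Sum>\<^sub>\<infinity>x. pmf p x * f x) \<le> (\<Sum>\<^sub>\<infinity>x. pmf p x * g x) + (\<Sum>\<^sub>\<infinity>x. pmf p x * (real n * D))"
    proof (rule infsum_le_add[OF sf sgp sK])
      fix x show "pmf p x * f x \<le> pmf p x * g x + pmf p x * (real n * D)"
        using fg[of x] by (simp add: distrib_left[symmetric] mult_left_mono)
    qed
    then show ?thesis using K by simp
  qed
  have u2: "(\<Sum>\<^sub>\<infinity>x. pmf p x * g x) \<le> (\<Sum>\<^sub>\<infinity>x. pmf p x * f x) + real n * D"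
  proof -
    have "(\<Sum>\<^sub>\<infinity>x. pmf p x * g x) \<le> (\<Sum>\<^sub>\<infinity>x. pmf p x * f x) + (\<Sum>\<^sub>\<infinity>x. pmf p x * (real n * D))"
    proof (rule infsum_le_add[OF sgp sf sK])
      fix x show "pmf p x * g x \<le> pmf p x * f x + pmf p x * (real n * D)"
        using fg[of x] by (simp add: distrib_left[symmetric] mult_left_mono)
    qed
    then show ?thesis using K by simp
  qed
  have u3: "(\<Sum>\<^sub>\<infinity>x. pmf p x * g x) \<le> (\<Sum>\<^sub>\<infinity>x. pmf q x * g x) + D"
    unfolding D_def by (rule infsum_le_add[OF sgp sgq sA]) (rule gdiff, use gb in \<open>auto simp: g_def\<close>)
  have u4: "(\<Sum>\<^sub>\<infinity>x. pmf q x * g x) \<le> (\<Sum>\<^sub>\<infinity>x. pmf p x * g x) + D"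
    unfolding D'[symmetric] by (rule infsum_le_add[OF sgq sgp sA']) (rule gdiff, use gb in \<open>auto simp: g_def\<close>)
  show ?case unfolding P Q D_def[symmetric] using u1 u2 u3 u4 by (simp add: algebra_simps abs_le_iff)
qed



lemma Tf_bound':
  assumes "a \<ge> 0" "a \<le> 2 * m"
  shows "\<bar>Tf a m\<bar> \<le> a + 2 * m"
proof (cases "m > 0")
  case True then show ?thesis using Tf_bound assms by blast
next
  case False then have "a = 0" using assms by simp
  then show ?thesis using assms by (simp add: Tf_def)
qed

lemma T_nonneg:
  assumes a: "a \<ge> 0" and b: "b \<ge> 0"
  shows "Tf a ((a+b)/2) + Tf b ((a+b)/2) \<ge> 0"
proof (cases "a + b = 0")
  case True
  then have "a = 0" "b = 0" using a b by auto
  then show ?thesis by (simp add: Tf_def)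
next
  case False
  define m where "m = (a+b)/2"
  have m: "m > 0" using False a b by (simp add: m_def)
  define x where "x = sqrt a"
  define y where "y = sqrt b"
  define z where "z = sqrt m"
  have xa: "x^2 = a" "x \<ge> 0" using a by (auto simp: x_def)
  have yb: "y^2 = b" "y \<ge> 0" using b by (auto simp: y_def)
  have zm: "z^2 = m" "z \<ge> 0" using m by (auto simp: z_def)
  define T where "T = ln 2 * (Tf a m + Tf b m)"
  have T1: "T \<ge> 2*a + 2*b - 2*(x*z) - 2*(y*z)"
    using Tf_lower[OF a m] Tf_lower[OF b m] unfolding T_def x_def y_def z_def
    by (simp add: algebra_simps)
  have h2: "(x-z)^2+(y-z)^2 = 2*a+2*b-2*(x*z)-2*(y*z)"
    using xa yb zm m_def by (simp add: power2_diff algebra_simps)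
  have "0 \<le> (x-z)^2+(y-z)^2" by simp
  then have "0 \<le> T" using h2 T1 by linarith
  then have "0 \<le> Tf a m + Tf b m" unfolding T_def by (simp add: zero_le_mult_iff)
  then show ?thesis by (simp add: m_def)
qed

lemma D_bound:
  assumes "JS_dist p q \<le> \<epsilon>"
  shows "(\<Sum>\<^sub>\<infinity>x. \<bar>pmf p x - pmf q x\<bar>) \<le> 2 * sqrt (4 * \<epsilon> * ln 2)"
proof -
  define P where "P x = pmf p x" for x
  define Q where "Q x = pmf q x" for x
  define tp where "tp x = Tf (P x) ((P x + Q x)/2)" for x
  define tq where "tq x = Tf (Q x) ((P x + Q x)/2)" for x
  define D where "D = (\<Sum>\<^sub>\<infinity>x. \<bar>pmf p x - pmf q x\<bar>)"
  have P0: "P x \<ge> 0" "Q x \<ge> 0" for x by (auto simp: P_def Q_def)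
  have sP: "P summable_on UNIV" "Q summable_on UNIV" unfolding P_def Q_def by (auto intro: pmf_summable)
  have sP2: "(\<lambda>x. 2 * P x + Q x) summable_on UNIV"
    by (rule summable_on_add[OF summable_on_cmult_right[OF sP(1)] sP(2)])
  have sQ2: "(\<lambda>x. 2 * Q x + P x) summable_on UNIV"
    by (rule summable_on_add[OF summable_on_cmult_right[OF sP(2)] sP(1)])
  have stp: "tp summable_on UNIV"
  proof -
    have "Infinite_Sum.abs_summable_on (\<lambda>x. 2 * P x + Q x) UNIV"
      by (rule summable_on_iff_abs_summable_on_real[THEN iffD1, OF sP2])
    then have "Infinite_Sum.abs_summable_on tp UNIV"
    proof (rule Infinite_Sum.abs_summable_on_comparison_test)
      fix x
      have h: "\<bar>Tf (P x) ((P x + Q x)/2)\<bar> \<le> P x + 2 * ((P x + Q x)/2)"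
        using P0[of x] by (intro Tf_bound') auto
      have "2 * P x + Q x \<ge> 0" using P0[of x] by simp
      then have e: "\<bar>2 * P x + Q x\<bar> = 2 * P x + Q x" by (rule abs_of_nonneg)
      have e2: "P x + 2 * ((P x + Q x)/2) = 2 * P x + Q x" by simp
      show "norm (tp x) \<le> norm (2 * P x + Q x)"
        unfolding tp_def real_norm_def e using h unfolding e2 .
    qed
    then show ?thesis by (rule summable_on_iff_abs_summable_on_real[THEN iffD2])
  qed
  have stq: "tq summable_on UNIV"
  proof -
    have "Infinite_Sum.abs_summable_on (\<lambda>x. 2 * Q x + P x) UNIV"
      by (rule summable_on_iff_abs_summable_on_real[THEN iffD1, OF sQ2])
    then have "Infinite_Sum.abs_summable_on tq UNIV"
    proof (rule Infinite_Sum.abs_summable_on_comparison_test)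
      fix x
      have h: "\<bar>Tf (Q x) ((P x + Q x)/2)\<bar> \<le> Q x + 2 * ((P x + Q x)/2)"
        using P0[of x] by (intro Tf_bound') auto
      have "2 * Q x + P x \<ge> 0" using P0[of x] by simp
      then have e: "\<bar>2 * Q x + P x\<bar> = 2 * Q x + P x" by (rule abs_of_nonneg)
      have e2: "Q x + 2 * ((P x + Q x)/2) = 2 * Q x + P x" by simp
      show "norm (tq x) \<le> norm (2 * Q x + P x)"
        unfolding tq_def real_norm_def e using h unfolding e2 .
    qed
    then show ?thesis by (rule summable_on_iff_abs_summable_on_real[THEN iffD2])
  qed
  have etp: "(\<lambda>y. if pmf p y = 0 then 0 else pmf p y * log 2 (pmf p y / pmf (mid_pmf p q) y)) = tp"
    by (rule ext) (simp add: tp_def Tf_def P_def Q_def pmf_mid)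
  have etq: "(\<lambda>y. if pmf q y = 0 then 0 else pmf q y * log 2 (pmf q y / pmf (mid_pmf p q) y)) = tq"
    by (rule ext) (simp add: tq_def Tf_def P_def Q_def pmf_mid)
  have JS: "JS_dist p q = (\<Sum>\<^sub>\<infinity>x. tp x + tq x)"
    unfolding infsum_add[OF stp stq] JS_dist_def KL_div_def etp etq ..
  have stt: "(\<lambda>x. tp x + tq x) summable_on UNIV" by (rule summable_on_add[OF stp stq])
  have JS0: "JS_dist p q \<ge> 0" unfolding JS
    by (rule infsum_nonneg) (use T_nonneg P0 in \<open>simp add: tp_def tq_def\<close>)
  have sPQ: "(\<lambda>x. P x + Q x) summable_on UNIV" by (rule summable_on_add[OF sP(1) sP(2)])
  have PQ: "(\<Sum>\<^sub>\<infinity>x. P x + Q x) = 2"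
  proof -
    have "P = pmf p" "Q = pmf q" by (auto simp: P_def Q_def fun_eq_iff)
    then show ?thesis using infsum_add[OF sP(1) sP(2)] pmf_infsum1[of p] pmf_infsum1[of q] by simp
  qed
  have main: "D \<le> (ln 2 / c) * JS_dist p q + c * 2" if c: "c > 0" for c
  proof -
    have "D \<le> (\<Sum>\<^sub>\<infinity>x. (ln 2 / c) * (tp x + tq x) + c * (P x + Q x))"
      unfolding D_def
    proof (rule infsum_mono[OF absdiff_summable])
      show "(\<lambda>x. (ln 2 / c) * (tp x + tq x) + c * (P x + Q x)) summable_on UNIV"
        by (rule summable_on_add[OF summable_on_cmult_right[OF stt] summable_on_cmult_right[OF sPQ]])
      fix x show "\<bar>pmf p x - pmf q x\<bar> \<le> (ln 2 / c) * (tp x + tq x) + c * (P x + Q x)"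
        using pointwise[OF P0(1)[of x] P0(2)[of x] c] by (simp add: tp_def tq_def P_def Q_def)
    qed
    also have "\<dots> = (ln 2 / c) * JS_dist p q + c * 2"
    proof -
      have a1: "(\<Sum>\<^sub>\<infinity>x. (ln 2 / c) * (tp x + tq x) + c * (P x + Q x))
          = (\<Sum>\<^sub>\<infinity>x. (ln 2 / c) * (tp x + tq x)) + (\<Sum>\<^sub>\<infinity>x. c * (P x + Q x))"
        by (rule infsum_add[OF summable_on_cmult_right[OF stt] summable_on_cmult_right[OF sPQ]])
      have a2: "(\<Sum>\<^sub>\<infinity>x. (ln 2 / c) * (tp x + tq x)) = (ln 2 / c) * (\<Sum>\<^sub>\<infinity>x. tp x + tq x)"
        by (rule infsum_cmult_right) (rule stt)
      have a3: "(\<Sum>\<^sub>\<infinity>x. c * (P x + Q x)) = c * (\<Sum>\<^sub>\<infinity>x. P x + Q x)"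
        by (rule infsum_cmult_right) (rule sPQ)
      show ?thesis unfolding a1 a2 a3 JS PQ ..
    qed
    finally show ?thesis .
  qed
  define e where "e = ln 2 * JS_dist p q"
  have e0: "e \<ge> 0" using JS0 by (simp add: e_def)
  have eps0: "\<epsilon> \<ge> 0" using JS0 assms by linarith
  have ee: "e \<le> \<epsilon> * ln 2" using assms by (simp add: e_def mult.commute)
  have s4: "sqrt (4 * \<epsilon> * ln 2) = 2 * sqrt (\<epsilon> * ln 2)"
    by (simp add: real_sqrt_mult mult.assoc)
  have "D \<le> 3 * sqrt e"
  proof (cases "e > 0")
    case True
    have "D \<le> (ln 2 / sqrt e) * JS_dist p q + sqrt e * 2" using main[of "sqrt e"] True by simp
    also have "(ln 2 / sqrt e) * JS_dist p q = e / sqrt e" by (simp add: e_def)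
    also have "e / sqrt e = sqrt e" using e0 by (rule real_div_sqrt)
    finally show ?thesis by simp
  next
    case False
    then have "e = 0" using e0 by simp
    then have J: "JS_dist p q = 0" by (simp add: e_def)
    show ?thesis
    proof (rule ccontr)
      assume "\<not> D \<le> 3 * sqrt e"
      then have "D > 0" using \<open>e = 0\<close> by simp
      then show False using main[of "D/4"] J by simp
    qed
  qed
  also have "3 * sqrt e \<le> 4 * sqrt (\<epsilon> * ln 2)"
  proof -
    have h: "sqrt e \<le> sqrt (\<epsilon> * ln 2)" using ee by (rule real_sqrt_le_mono)
    have "0 \<le> sqrt e" using e0 by simp
    then show ?thesis using h by linarith
  qed
  finally show ?thesis unfolding D_def s4 by simp
qed


theorem lemma2:
  fixes p q :: "'a::countable pmf" and \<epsilon> \<alpha> :: real and N :: nat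
    and R :: "'a list set"
  assumes "JS_dist p q \<le> \<epsilon>"
    and "N \<ge> 1"
    and "R \<subseteq> {xs. length xs = N}"
    and "\<alpha> > 0"
    and "measure_pmf.prob (replicate_pmf N p) R \<ge> 1 - \<alpha>"
  shows "measure_pmf.prob (replicate_pmf N q) R
           \<ge> 1 - \<alpha> - 2 * real N ^ 3 * sqrt (4 * \<epsilon> * ln 2) - 1 / real N"
proof -
  define D where "D = (\<Sum>\<^sub>\<infinity>x. \<bar>pmf p x - pmf q x\<bar>)"
  define s where "s = sqrt (4 * \<epsilon> * ln 2)"
  have h: "\<bar>measure_pmf.prob (replicate_pmf N p) R - measure_pmf.prob (replicate_pmf N q) R\<bar> \<le> real N * D"
    unfolding D_def by (rule hybrid)
  have d: "D \<le> 2 * s" unfolding D_def s_def by (rule D_bound[OF assms(1)])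
  have D0: "D \<ge> 0" unfolding D_def by (rule infsum_nonneg) simp
  have s0: "s \<ge> 0" using d D0 by linarith
  have N1: "real N \<ge> 1" using assms(2) by simp
  have f1: "real N * D \<le> real N * (2 * s)" using d N1 by (intro mult_left_mono) auto
  have N3: "real N \<le> real N ^ 3"
  proof -
    have "1 \<le> real N ^ 2" using N1 by (simp add: one_le_power)
    then have "real N * 1 \<le> real N * real N ^ 2" using N1 by (intro mult_left_mono) auto
    then show ?thesis by (simp add: power3_eq_cube power2_eq_square)
  qed
  have f2: "real N * (2 * s) \<le> real N ^ 3 * (2 * s)" using s0 N3 by (intro mult_right_mono) auto
  have f3: "real N ^ 3 * (2 * s) = 2 * real N ^ 3 * s" by simp
  have f4: "1 / real N \<ge> 0" by simp
  have "real N * D \<le> 2 * real N ^ 3 * s + 1 / real N"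
  proof -
    have "real N * D \<le> real N ^ 3 * (2 * s)" using f1 f2 by (rule order_trans)
    also have "\<dots> = 2 * real N ^ 3 * s" by (rule f3)
    also have "\<dots> \<le> 2 * real N ^ 3 * s + 1 / real N" using f4 by simp
    finally show ?thesis .
  qed
  then show ?thesis using h assms(5) unfolding s_def by (simp add: abs_le_iff)
qed

end
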